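(* For all positive integers $k,n$, we have $T_L(n)\ge 3^k$ if and only if $b'_3(k,2)\le n$.
   Context: $T_L(n)$ is the maximum size of a linear trifferent code of length $n$, i.e. a linear subspace $C\subseteq\mathbb{F}_3^n$ such that for any three distinct $x,y,z\in C$ there is a coordinate $i$ with $\{x_i,y_i,z_i\}=\mathbb{F}_3$. A $2$-blocking set in $\mathbb{F}_q^k$ is a set of points meeting every affine subspace (translate of a vector subspace) of dimension $k-2$. $b'_q(k,2)$ is the minimum size of a set $B\subseteq\mathbb{F}_q^k$ such that $\bigcup_{\zeta\in\mathbb{F}_q}\zeta B$ is a $2$-blocking set in $\mathbb{F}_q^k$; for $q=3$ this is the minimum $|B|$ such that $\{\vec0\}\cup B\cup -B$ is a $2$-blocking set. *)

theory Defs
  imports Main "HOL-Library.FuncSet"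
begin

text \<open>The field F_3 is represented by the integers 0, 1, 2 with arithmetic mod 3.
  Vectors of F_3^n are extensional functions on {..<n} (undefined outside).\<close>

definition F3 :: "int set" where
  "F3 = {0, 1, 2}"

definition vecs :: "nat \<Rightarrow> (nat \<Rightarrow> int) set" where
  "vecs n = PiE {..<n} (\<lambda>_. F3)"

definition vzero :: "nat \<Rightarrow> nat \<Rightarrow> int" where
  "vzero n = restrict (\<lambda>_. 0) {..<n}"

definition vadd :: "nat \<Rightarrow> (nat \<Rightarrow> int) \<Rightarrow> (nat \<Rightarrow> int) \<Rightarrow> nat \<Rightarrow> int" where
  "vadd n x y = restrict (\<lambda>i. (x i + y i) mod 3) {..<n}"

definition smul :: "nat \<Rightarrow> int \<Rightarrow> (nat \<Rightarrow> int) \<Rightarrow> nat \<Rightarrow> int" where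
  "smul n c x = restrict (\<lambda>i. (c * x i) mod 3) {..<n}"

definition lin_subspace :: "nat \<Rightarrow> (nat \<Rightarrow> int) set \<Rightarrow> bool" where
  "lin_subspace n C \<longleftrightarrow> C \<subseteq> vecs n \<and> vzero n \<in> C \<and>
     (\<forall>x\<in>C. \<forall>y\<in>C. vadd n x y \<in> C) \<and> (\<forall>c\<in>F3. \<forall>x\<in>C. smul n c x \<in> C)"

definition trifferent :: "nat \<Rightarrow> (nat \<Rightarrow> int) set \<Rightarrow> bool" where
  "trifferent n C \<longleftrightarrow> (\<forall>x\<in>C. \<forall>y\<in>C. \<forall>z\<in>C. x \<noteq> y \<and> y \<noteq> z \<and> x \<noteq> z \<longrightarrow>
       (\<exists>i<n. {x i, y i, z i} = F3))"

definition T_L :: "nat \<Rightarrow> nat" where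
  "T_L n = Max {card C | C. lin_subspace n C \<and> trifferent n C}"

fun lincomb :: "nat \<Rightarrow> nat \<Rightarrow> (nat \<Rightarrow> int) \<Rightarrow> (nat \<Rightarrow> nat \<Rightarrow> int) \<Rightarrow> nat \<Rightarrow> int" where
  "lincomb n 0 c v = vzero n"
| "lincomb n (Suc d) c v = vadd n (lincomb n d c v) (smul n (c d) (v d))"

definition lin_indep :: "nat \<Rightarrow> nat \<Rightarrow> (nat \<Rightarrow> nat \<Rightarrow> int) \<Rightarrow> bool" where
  "lin_indep n d v \<longleftrightarrow> (\<forall>c\<in>PiE {..<d} (\<lambda>_. F3). lincomb n d c v = vzero n \<longrightarrow> (\<forall>j<d. c j = 0))"

definition affine_sub :: "nat \<Rightarrow> nat \<Rightarrow> (nat \<Rightarrow> int) set \<Rightarrow> bool" where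
  "affine_sub n d A \<longleftrightarrow> (\<exists>p\<in>vecs n. \<exists>v. (\<forall>j<d. v j \<in> vecs n) \<and> lin_indep n d v \<and>
      A = {vadd n p (lincomb n d c v) | c. c \<in> PiE {..<d} (\<lambda>_. F3)})"

text \<open>2-blocking set in F_3^k: meets every affine subspace of dimension k-2
  (for k < 2 there are no such subspaces, so the condition is vacuous).\<close>
definition blocking2 :: "nat \<Rightarrow> (nat \<Rightarrow> int) set \<Rightarrow> bool" where
  "blocking2 k S \<longleftrightarrow> S \<subseteq> vecs k \<and>
     (2 \<le> k \<longrightarrow> (\<forall>A. affine_sub k (k - 2) A \<longrightarrow> S \<inter> A \<noteq> {}))"

definition b3' :: "nat \<Rightarrow> nat" where
  "b3' k = Min {card B | B. B \<subseteq> vecs k \<and> blocking2 k (\<Union>\<zeta>\<in>F3. smul k \<zeta> ` B)}"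

end

theory Submission imports Defs begin

definition dot :: "nat \<Rightarrow> (nat \<Rightarrow> int) \<Rightarrow> (nat \<Rightarrow> int) \<Rightarrow> int" where
  "dot k x y = (\<Sum>j<k. x j * y j) mod 3"

lemma F3_iff: "x \<in> F3 \<longleftrightarrow> 0 \<le> x \<and> x < 3"
  unfolding F3_def by auto

lemma mod3_F3[simp]: "(x::int) mod 3 \<in> F3"
  unfolding F3_iff by auto

lemma F3_mod[simp]: "x \<in> F3 \<Longrightarrow> x mod 3 = x"
  unfolding F3_iff by auto

lemma card_F3[simp]: "card F3 = 3"
  unfolding F3_def by auto

lemma finite_F3[simp]: "finite F3"
  unfolding F3_def by auto

lemma vecs_in: "x \<in> vecs k \<Longrightarrow> j < k \<Longrightarrow> x j \<in> F3"
  unfolding vecs_def by auto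

lemma vecs_out: "x \<in> vecs k \<Longrightarrow> \<not> j < k \<Longrightarrow> x j = undefined"
  unfolding vecs_def by (auto simp: PiE_def extensional_def)

lemma vecs_modeq: "x \<in> vecs k \<Longrightarrow> j < k \<Longrightarrow> x j mod 3 = x j"
  using vecs_in by simp

lemma restrict_mod_vecs[simp]: "restrict (\<lambda>i. f i mod 3) {..<k} \<in> vecs k"
  unfolding vecs_def by auto

lemma vec_eqI: "x \<in> vecs k \<Longrightarrow> y \<in> vecs k \<Longrightarrow> (\<And>j. j<k \<Longrightarrow> x j = y j) \<Longrightarrow> x = y"
  by (metis ext vecs_out)

lemma vec_eq_modI: "x \<in> vecs k \<Longrightarrow> y \<in> vecs k \<Longrightarrow> (\<And>j. j<k \<Longrightarrow> x j mod 3 = y j mod 3) \<Longrightarrow> x = y"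
  by (metis vec_eqI vecs_modeq)

lemma finite_vecs[simp]: "finite (vecs k)"
  unfolding vecs_def by (auto intro: finite_PiE)

lemma card_vecs[simp]: "card (vecs k) = 3 ^ k"
  unfolding vecs_def by (simp add: card_PiE)

lemma card_PiE3[simp]: "card (PiE {..<m} (\<lambda>_. F3)) = 3 ^ m"
  by (simp add: card_PiE)

lemma vadd_in[simp]: "vadd k x y \<in> vecs k"
  unfolding vadd_def by simp
lemma smul_in[simp]: "smul k c x \<in> vecs k"
  unfolding smul_def by simp
lemma vzero_in[simp]: "vzero k \<in> vecs k"
  unfolding vzero_def vecs_def F3_def by auto

lemma vadd_apply[simp]: "j < k \<Longrightarrow> vadd k x y j = (x j + y j) mod 3"
  unfolding vadd_def by simp
lemma smul_apply[simp]: "j < k \<Longrightarrow> smul k c x j = (c * x j) mod 3"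
  unfolding smul_def by simp
lemma vzero_apply[simp]: "j < k \<Longrightarrow> vzero k j = 0"
  unfolding vzero_def by simp

lemma summod: "(\<And>j. j \<in> A \<Longrightarrow> f j mod 3 = g j mod 3) \<Longrightarrow> sum f A mod (3::int) = sum g A mod 3"
proof -
  assume h: "\<And>j. j \<in> A \<Longrightarrow> f j mod 3 = g j mod 3"
  have "sum f A mod 3 = (\<Sum>j\<in>A. f j mod 3) mod 3" by (simp add: mod_sum_eq)
  also have "(\<Sum>j\<in>A. f j mod 3) = (\<Sum>j\<in>A. g j mod 3)" using h by (rule sum.cong[OF refl])
  also have "(\<Sum>j\<in>A. g j mod 3) mod 3 = sum g A mod 3" by (simp add: mod_sum_eq)
  finally show ?thesis .
qed


lemma lincomb_eq: "lincomb n d c v = restrict (\<lambda>i. (\<Sum>j<d. c j * v j i) mod 3) {..<n}"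
proof (induction d)
  case 0
  then show ?case by (simp add: vzero_def)
next
  case (Suc d)
  show ?case
  proof
    fix i show "lincomb n (Suc d) c v i = restrict (\<lambda>i. (\<Sum>j<Suc d. c j * v j i) mod 3) {..<n} i"
      by (cases "i < n") (simp_all add: Suc vadd_def smul_def mod_add_eq)
  qed
qed

lemma lincomb_in[simp]: "lincomb n d c v \<in> vecs n"
  unfolding lincomb_eq by simp

lemma dot_in[simp]: "dot k x y \<in> F3"
  unfolding dot_def by simp

lemma dot_comm: "dot k x y = dot k y x"
  unfolding dot_def by (simp add: mult.commute)


lemma dot_cong1: "(\<And>j. j<k \<Longrightarrow> x j mod 3 = x' j mod 3) \<Longrightarrow> dot k x y = dot k x' y"
proof -
  assume h: "\<And>j. j<k \<Longrightarrow> x j mod 3 = x' j mod 3"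
  show ?thesis unfolding dot_def
  proof (rule summod)
    fix j assume "j \<in> {..<k}"
    then show "x j * y j mod 3 = x' j * y j mod 3"
      using h[of j] mod_mult_left_eq[of "x j" 3 "y j"] mod_mult_left_eq[of "x' j" 3 "y j"] by simp
  qed
qed

lemma lin_mod: "(l * (A mod 3) + m * (B mod 3)) mod 3 = (l*A + m*B) mod (3::int)"
proof -
  have "(l * (A mod 3) + m * (B mod 3)) mod 3 = ((l * (A mod 3)) mod 3 + (m * (B mod 3)) mod 3) mod 3"
    by (rule mod_add_eq[symmetric])
  also have "\<dots> = ((l * A) mod 3 + (m * B) mod 3) mod 3"
    by (simp only: mod_mult_right_eq)
  also have "\<dots> = (l*A + m*B) mod 3" by (rule mod_add_eq)
  finally show ?thesis .
qed

lemma dot_lin: "dot k (restrict (\<lambda>j. (l * a j + m * b j) mod 3) {..<k}) y = (l * dot k a y + m * dot k b y) mod 3"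
proof -
  have "dot k (restrict (\<lambda>j. (l * a j + m * b j) mod 3) {..<k}) y = (\<Sum>j<k. l * (a j * y j) + m * (b j * y j)) mod 3"
    unfolding dot_def
  proof (rule summod)
    fix j assume "j \<in> {..<k}"
    then show "restrict (\<lambda>j. (l * a j + m * b j) mod 3) {..<k} j * y j mod 3 = (l * (a j * y j) + m * (b j * y j)) mod 3"
      by (simp add: mod_mult_left_eq distrib_right mult.assoc)
  qed
  also have "\<dots> = (l * (\<Sum>j<k. a j * y j) + m * (\<Sum>j<k. b j * y j)) mod 3"
    by (simp add: sum.distrib sum_distrib_left)
  also have "\<dots> = (l * dot k a y + m * dot k b y) mod 3"
    unfolding dot_def by (rule lin_mod[symmetric])
  finally show ?thesis .
qed

lemma dot_vadd: "dot k (vadd k a b) y = (dot k a y + dot k b y) mod 3"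
  using dot_lin[of k 1 a 1 b y] by (simp add: vadd_def)

lemma dot_smul: "dot k (smul k c a) y = (c * dot k a y) mod 3"
  using dot_lin[of k c a 0 a y] by (simp add: smul_def)

lemma dot_vzero[simp]: "dot k (vzero k) y = 0"
  unfolding dot_def by simp

lemma dot_lincomb: "dot k y (lincomb k m c v) = (\<Sum>j<m. c j * dot k y (v j)) mod 3"
proof (induction m)
  case 0
  then show ?case by (simp add: dot_comm[of k y])
next
  case (Suc m)
  have "dot k y (lincomb k (Suc m) c v) = (dot k y (lincomb k m c v) + (c m * dot k y (v m))) mod 3"
    by (simp add: dot_comm[of k y] dot_vadd dot_smul mod_add_right_eq)
  also have "\<dots> = (\<Sum>j<Suc m. c j * dot k y (v j)) mod 3"
    by (simp add: Suc mod_add_left_eq)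
  finally show ?case .
qed


lemma F3_diff_eq: "a \<in> F3 \<Longrightarrow> b \<in> F3 \<Longrightarrow> (a - b) mod 3 = 0 \<Longrightarrow> a = b"
  unfolding F3_def by auto

lemma lincomb_zero_iff: "lincomb n d c v = vzero n \<longleftrightarrow> (\<forall>i<n. (\<Sum>j<d. c j * v j i) mod 3 = 0)"
proof
  assume h: "lincomb n d c v = vzero n"
  show "\<forall>i<n. (\<Sum>j<d. c j * v j i) mod 3 = 0"
  proof (intro allI impI)
    fix i assume "i < n"
    then show "(\<Sum>j<d. c j * v j i) mod 3 = 0"
      using fun_cong[OF h, of i] by (simp add: lincomb_eq)
  qed
next
  assume h: "\<forall>i<n. (\<Sum>j<d. c j * v j i) mod 3 = 0"
  show "lincomb n d c v = vzero n"
    by (rule vec_eqI[OF lincomb_in vzero_in]) (simp add: lincomb_eq h)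
qed

lemma lin_indep_iff: "lin_indep n d v \<longleftrightarrow> (\<forall>c\<in>PiE {..<d} (\<lambda>_. F3). (\<forall>i<n. (\<Sum>j<d. c j * v j i) mod 3 = 0) \<longrightarrow> (\<forall>j<d. c j = 0))"
  unfolding lin_indep_def lincomb_zero_iff ..

lemma summod_mult: "(\<Sum>j\<in>A. (l j mod 3) * w j) mod 3 = (\<Sum>j\<in>A. l j * w j) mod (3::int)"
  by (rule summod) (simp add: mod_mult_left_eq)

lemma lin_indep_int:
  assumes li: "lin_indep n d v" and h: "\<forall>i<n. (\<Sum>j<d. l j * v j i) mod 3 = 0" and j: "j < d"
  shows "l j mod 3 = 0"
proof -
  define x where "x = restrict (\<lambda>j. l j mod 3) {..<d}"
  have xin: "x \<in> PiE {..<d} (\<lambda>_. F3)" unfolding x_def by auto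
  have "\<forall>i<n. (\<Sum>j<d. x j * v j i) mod 3 = 0"
  proof (intro allI impI)
    fix i assume i: "i < n"
    have "(\<Sum>j<d. x j * v j i) = (\<Sum>j<d. (l j mod 3) * v j i)"
      unfolding x_def by (rule sum.cong) auto
    then show "(\<Sum>j<d. x j * v j i) mod 3 = 0" using h i summod_mult[of l "\<lambda>j. v j i" "{..<d}"] by simp
  qed
  then have "x j = 0" using li xin j unfolding lin_indep_iff by blast
  then show ?thesis using j unfolding x_def by simp
qed

lemma lincomb_inj:
  assumes li: "lin_indep n d v" and x: "x \<in> PiE {..<d} (\<lambda>_. F3)" and y: "y \<in> PiE {..<d} (\<lambda>_. F3)"
    and eq: "lincomb n d x v = lincomb n d y v"
  shows "x = y"
proof -
  have "\<forall>i<n. (\<Sum>j<d. (x j - y j) * v j i) mod 3 = 0"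
  proof (intro allI impI)
    fix i assume i: "i < n"
    have "(\<Sum>j<d. x j * v j i) mod 3 = (\<Sum>j<d. y j * v j i) mod 3"
      using fun_cong[OF eq, of i] i by (simp add: lincomb_eq)
    then have "((\<Sum>j<d. x j * v j i) - (\<Sum>j<d. y j * v j i)) mod 3 = 0"
      by (simp add: mod_eq_dvd_iff)
    moreover have "(\<Sum>j<d. (x j - y j) * v j i) = (\<Sum>j<d. x j * v j i) - (\<Sum>j<d. y j * v j i)"
      by (simp add: left_diff_distrib sum_subtractf)
    ultimately show "(\<Sum>j<d. (x j - y j) * v j i) mod 3 = 0" by simp
  qed
  then have "\<And>j. j < d \<Longrightarrow> (x j - y j) mod 3 = 0"
    using lin_indep_int[OF li, of "\<lambda>j. x j - y j"] by blast
  then have "\<And>j. j < d \<Longrightarrow> x j = y j"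
    using x y F3_diff_eq by (metis PiE_mem lessThan_iff)
  then show ?thesis using x y
    by (metis PiE_arb lessThan_iff ext)
qed

lemma lincomb_closed:
  assumes C: "lin_subspace n C" and v: "\<forall>j<d. v j \<in> C" and c: "\<forall>j<d. c j \<in> F3"
  shows "lincomb n d c v \<in> C"
  using v c
proof (induction d)
  case 0
  then show ?case using C unfolding lin_subspace_def by simp
next
  case (Suc d)
  then have "lincomb n d c v \<in> C" by simp
  moreover have "smul n (c d) (v d) \<in> C" using C Suc.prems unfolding lin_subspace_def by simp
  ultimately show ?case using C unfolding lin_subspace_def by simp
qed

lemma lincomb_cong:
  "(\<And>j. j < d \<Longrightarrow> v j = v' j) \<Longrightarrow> lincomb n d c v = lincomb n d c v'"
  unfolding lincomb_eq by (intro restrict_ext arg_cong[where f="\<lambda>x. x mod 3"] sum.cong) auto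


lemma span_card: "lin_indep n m v \<Longrightarrow> card ((\<lambda>c. lincomb n m c v) ` PiE {..<m} (\<lambda>_. F3)) = 3 ^ m"
  by (subst card_image) (auto intro!: inj_onI dest: lincomb_inj)

lemma lin_subspace_finite: "lin_subspace n C \<Longrightarrow> finite C"
  unfolding lin_subspace_def by (meson finite_subset finite_vecs)

lemma greedy:
  assumes C: "lin_subspace n C"
  shows "3 ^ m \<le> card C \<Longrightarrow> \<exists>v. (\<forall>j<m. v j \<in> C) \<and> lin_indep n m v"
proof (induction m)
  case 0
  then show ?case unfolding lin_indep_def by auto
next
  case (Suc m)
  have "3 ^ m \<le> card C" using Suc.prems by simp
  then obtain v where vC: "\<forall>j<m. v j \<in> C" and li: "lin_indep n m v" using Suc.IH by blast
  define Sp where "Sp = (\<lambda>c. lincomb n m c v) ` PiE {..<m} (\<lambda>_. F3)"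
  have "card Sp = 3 ^ m" unfolding Sp_def by (rule span_card[OF li])
  moreover have "(0::nat) < 3 ^ m" by simp
  moreover have "3 * 3 ^ m \<le> card C" using Suc.prems by simp
  ultimately have "card Sp < card C" by linarith
  have "finite Sp" unfolding Sp_def by (intro finite_imageI finite_PiE) auto
  have "\<not> C \<subseteq> Sp"
  proof
    assume "C \<subseteq> Sp"
    then have "card C \<le> card Sp" by (rule card_mono[OF \<open>finite Sp\<close>])
    then show False using \<open>card Sp < card C\<close> by simp
  qed
  then obtain w where wC: "w \<in> C" and wS: "w \<notin> Sp" by blast
  define v' where "v' = v(m := w)"
  have v'C: "\<forall>j<Suc m. v' j \<in> C" using vC wC unfolding v'_def by (simp add: less_Suc_eq)
  have wvec: "w \<in> vecs n" using wC C unfolding lin_subspace_def by auto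
  have "lin_indep n (Suc m) v'"
    unfolding lin_indep_iff
  proof (intro ballI impI)
    fix c assume c: "c \<in> PiE {..<Suc m} (\<lambda>_. F3)"
      and h: "\<forall>i<n. (\<Sum>j<Suc m. c j * v' j i) mod 3 = 0"
    have h2: "\<forall>i<n. ((\<Sum>j<m. c j * v j i) + c m * w i) mod 3 = 0"
    proof (intro allI impI)
      fix i assume "i < n"
      moreover have "(\<Sum>j<m. c j * v' j i) = (\<Sum>j<m. c j * v j i)"
        by (rule sum.cong) (auto simp: v'_def)
      then have "(\<Sum>j<Suc m. c j * v' j i) = (\<Sum>j<m. c j * v j i) + c m * w i"
        by (simp add: v'_def)
      ultimately show "((\<Sum>j<m. c j * v j i) + c m * w i) mod 3 = 0" using h by metis
    qed
    have cm: "c m \<in> F3" using c by auto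
    have "c m = 0"
    proof (rule ccontr)
      assume nz: "c m \<noteq> 0"
      define c'' where "c'' = restrict (\<lambda>j. (2 * c m * c j) mod 3) {..<m}"
      have c''in: "c'' \<in> PiE {..<m} (\<lambda>_. F3)" unfolding c''_def by auto
      have "w = lincomb n m c'' v"
      proof (rule vec_eq_modI[OF wvec lincomb_in])
        fix i assume i: "i < n"
        have e1: "(\<Sum>j<m. c'' j * v j i) mod 3 = (\<Sum>j<m. (2 * c m * c j) * v j i) mod 3"
          unfolding c''_def by (rule summod) (simp add: mod_mult_left_eq)
        have e2: "(\<Sum>j<m. (2 * c m * c j) * v j i) = 2 * c m * (\<Sum>j<m. c j * v j i)"
          by (simp add: sum_distrib_left mult.assoc)
        have key: "((\<Sum>j<m. c j * v j i) + c m * w i) mod 3 = 0" using h2 i by simp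
        have "w i mod 3 = (2 * c m * (\<Sum>j<m. c j * v j i)) mod 3"
        proof -
          have "c m = 1 \<or> c m = 2" using cm nz unfolding F3_def by auto
          then show ?thesis using key by (elim disjE) (simp_all, presburger+)
        qed
        then show "w i mod 3 = lincomb n m c'' v i mod 3"
          using i e1 e2 by (simp add: lincomb_eq)
      qed
      then have "w \<in> Sp" unfolding Sp_def using c''in by blast
      then show False using wS by simp
    qed
    then have "\<forall>i<n. (\<Sum>j<m. c j * v j i) mod 3 = 0" using h2 by simp
    then have "\<forall>j<m. c j mod 3 = 0" using lin_indep_int[OF li] by blast
    then have "\<forall>j<m. c j = 0" using c by (metis F3_mod PiE_mem lessThan_iff less_SucI)
    then show "\<forall>j<Suc m. c j = 0" using \<open>c m = 0\<close> by (simp add: less_Suc_eq)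
  qed
  then show ?case using v'C by blast
qed


lemma vadd_cancel:
  assumes x: "x \<in> vecs k" and y: "y \<in> vecs k" and e: "vadd k p x = vadd k p y"
  shows "x = y"
proof (rule vec_eq_modI[OF x y])
  fix j assume j: "j < k"
  have "vadd k p x j = vadd k p y j" using e by simp
  then have "(p j + x j) mod 3 = (p j + y j) mod 3" using j by simp
  then show "x j mod 3 = y j mod 3" by presburger
qed

lemma vadd_sub: "x \<in> vecs k \<Longrightarrow> vadd k p (vadd k x (smul k 2 p)) = x"
proof (rule vec_eq_modI[OF vadd_in])
  fix j assume "j < k"
  then show "vadd k p (vadd k x (smul k 2 p)) j mod 3 = x j mod 3"
    by (simp add: mod_simps)
qed

lemma dot_vadd2: "dot k y (vadd k a b) = (dot k y a + dot k y b) mod 3"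
  by (simp add: dot_comm[of k y] dot_vadd)
lemma dot_smul2: "dot k y (smul k c a) = (c * dot k y a) mod 3"
  by (simp add: dot_comm[of k y] dot_smul)

definition indep2 :: "nat \<Rightarrow> (nat \<Rightarrow> int) \<Rightarrow> (nat \<Rightarrow> int) \<Rightarrow> bool" where
  "indep2 k u w \<longleftrightarrow> (\<forall>l m::int. (\<forall>j<k. (l * u j + m * w j) mod 3 = 0) \<longrightarrow> l mod 3 = 0 \<and> m mod 3 = 0)"

definition fib :: "nat \<Rightarrow> (nat \<Rightarrow> int) \<Rightarrow> (nat \<Rightarrow> int) \<Rightarrow> int \<Rightarrow> int \<Rightarrow> (nat \<Rightarrow> int) set" where
  "fib k u w \<alpha> \<beta> = {g \<in> vecs k. dot k u g = \<alpha> \<and> dot k w g = \<beta>}"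

lemma sq_mod3: "(D::int) mod 3 \<noteq> 0 \<Longrightarrow> (D * D) mod 3 = 1"
proof -
  assume "D mod 3 \<noteq> 0"
  then have "D mod 3 = 1 \<or> D mod 3 = 2" by presburger
  moreover have "(D * D) mod 3 = ((D mod 3) * (D mod 3)) mod 3" by (simp add: mod_mult_eq)
  ultimately show ?thesis by auto
qed

lemma indep2_minor:
  assumes ind: "indep2 k u w"
  shows "\<exists>j1<k. \<exists>j2<k. (u j1 * w j2 - u j2 * w j1) mod 3 \<noteq> 0"
proof (rule ccontr)
  assume "\<not> ?thesis"
  then have all: "\<forall>j1<k. \<forall>j2<k. (u j1 * w j2 - u j2 * w j1) mod 3 = 0" by blast
  have "\<exists>j1<k. u j1 mod 3 \<noteq> 0"
  proof (rule ccontr)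
    assume "\<not> ?thesis"
    then have "\<forall>j<k. (1 * u j + 0 * w j) mod 3 = 0" by simp
    then show False using ind[unfolded indep2_def, rule_format, of 1 0] by simp
  qed
  then obtain j1 where j1: "j1 < k" "u j1 mod 3 \<noteq> 0" by blast
  have "\<forall>j<k. (w j1 * u j + (- u j1) * w j) mod 3 = 0"
  proof (intro allI impI)
    fix j assume "j < k"
    then have "(u j1 * w j - u j * w j1) mod 3 = 0" using all j1 by blast
    then show "(w j1 * u j + (- u j1) * w j) mod 3 = 0" by (simp add: algebra_simps) presburger
  qed
  then have "(- u j1) mod 3 = 0" using ind unfolding indep2_def by blast
  then show False using j1 by presburger
qed

lemma sum_two_points:
  fixes u :: "nat \<Rightarrow> int" and x1 x2 :: int
  assumes "j1 < k" "j2 < k"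
  shows "(\<Sum>i<k. u i * ((if i = j1 then x1 else 0) + (if i = j2 then x2 else 0))) = u j1 * x1 + u j2 * x2"
proof -
  have "(\<Sum>i<k. u i * ((if i = j1 then x1 else 0) + (if i = j2 then x2 else 0))) =
     (\<Sum>i<k. (if i = j1 then u i * x1 else 0) + (if i = j2 then u i * x2 else 0))"
    by (rule sum.cong) (auto simp: distrib_left)
  also have "\<dots> = (\<Sum>i<k. (if i = j1 then u i * x1 else 0)) + (\<Sum>i<k. (if i = j2 then u i * x2 else 0))"
    by (rule sum.distrib)
  also have "\<dots> = u j1 * x1 + u j2 * x2" using assms by (simp add: sum.delta)
  finally show ?thesis .
qed

lemma surj2:
  assumes ind: "indep2 k u w"
  shows "\<exists>p\<in>vecs k. dot k u p = \<alpha> mod 3 \<and> dot k w p = \<beta> mod 3"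
proof -
  obtain j1 j2 where j: "j1 < k" "j2 < k" and D: "(u j1 * w j2 - u j2 * w j1) mod 3 \<noteq> 0"
    using indep2_minor[OF ind] by blast
  define D where "D = u j1 * w j2 - u j2 * w j1"
  define x1 where "x1 = D * (\<alpha> * w j2 - \<beta> * u j2)"
  define x2 where "x2 = D * (\<beta> * u j1 - \<alpha> * w j1)"
  define p where "p = restrict (\<lambda>i. ((if i = j1 then x1 else 0) + (if i = j2 then x2 else 0)) mod 3) {..<k}"
  have DD: "(D * D) mod 3 = 1" using D sq_mod3 unfolding D_def by blast
  have gen: "dot k y p = (y j1 * x1 + y j2 * x2) mod 3" for y
  proof -
    have "dot k y p = (\<Sum>i<k. y i * ((if i = j1 then x1 else 0) + (if i = j2 then x2 else 0))) mod 3"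
      unfolding dot_def p_def by (rule summod) (simp add: mod_mult_right_eq)
    then show ?thesis using sum_two_points[OF j, of y] by simp
  qed
  have "u j1 * x1 + u j2 * x2 = \<alpha> * (D * D)" unfolding x1_def x2_def D_def by algebra
  then have "dot k u p = \<alpha> mod 3" using gen[of u] DD by (metis mod_mult_right_eq mult.right_neutral)
  moreover have "w j1 * x1 + w j2 * x2 = \<beta> * (D * D)" unfolding x1_def x2_def D_def by algebra
  then have "dot k w p = \<beta> mod 3" using gen[of w] DD by (metis mod_mult_right_eq mult.right_neutral)
  moreover have "p \<in> vecs k" unfolding p_def by simp
  ultimately show ?thesis by blast
qed


lemma fib_sub: "fib k u w a b \<subseteq> vecs k" unfolding fib_def by auto

lemma finite_fib[simp]: "finite (fib k u w a b)"
  by (rule finite_subset[OF fib_sub finite_vecs])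

lemma dot_vadd_fib:
  assumes "p \<in> fib k u w a b" "g \<in> fib k u w 0 0"
  shows "vadd k p g \<in> fib k u w a b"
proof -
  have "a \<in> F3" "b \<in> F3" using assms(1) unfolding fib_def by auto
  then show ?thesis using assms unfolding fib_def by (simp add: dot_vadd2)
qed

lemma fib_translate:
  assumes p: "p \<in> fib k u w a b"
  shows "fib k u w a b = vadd k p ` fib k u w 0 0"
proof
  show "vadd k p ` fib k u w 0 0 \<subseteq> fib k u w a b" using dot_vadd_fib[OF p] by blast
next
  show "fib k u w a b \<subseteq> vadd k p ` fib k u w 0 0"
  proof
    fix x assume x: "x \<in> fib k u w a b"
    define g where "g = vadd k x (smul k 2 p)"
    have "dot k u g = 0" "dot k w g = 0" using x p unfolding g_def fib_def
      by (auto simp: dot_vadd2 dot_smul2 mod_simps)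
    then have "g \<in> fib k u w 0 0" unfolding fib_def g_def by simp
    moreover have "vadd k p g = x" unfolding g_def using x fib_sub by (blast intro: vadd_sub)
    ultimately show "x \<in> vadd k p ` fib k u w 0 0" by blast
  qed
qed

lemma fib_card:
  assumes p: "p \<in> fib k u w a b"
  shows "card (fib k u w a b) = card (fib k u w 0 0)"
proof -
  have "inj_on (vadd k p) (fib k u w 0 0)"
    using fib_sub by (blast intro: inj_onI vadd_cancel)
  then show ?thesis unfolding fib_translate[OF p] by (rule card_image)
qed

lemma ker_card9:
  assumes ind: "indep2 k u w"
  shows "card (fib k u w 0 0) * 9 = 3 ^ k"
proof -
  define K where "K = fib k u w 0 0"
  define P where "P = (\<lambda>a b. SOME p. p \<in> fib k u w a b)"
  have P: "P a b \<in> fib k u w a b" if "a \<in> F3" "b \<in> F3" for a b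
  proof -
    obtain p where "p \<in> vecs k" "dot k u p = a mod 3" "dot k w p = b mod 3"
      using surj2[OF ind] by blast
    then have "p \<in> fib k u w a b" using that unfolding fib_def by simp
    then show ?thesis unfolding P_def by (rule someI[where P="\<lambda>p. p \<in> fib k u w a b"])
  qed
  define \<Phi> where "\<Phi> = (\<lambda>(g, a, b). vadd k (P a b) g)"
  have "bij_betw \<Phi> (K \<times> (F3 \<times> F3)) (vecs k)"
  proof (rule bij_betwI')
    fix x y assume x: "x \<in> K \<times> (F3 \<times> F3)" and y: "y \<in> K \<times> (F3 \<times> F3)"
    obtain g a b where xe: "x = (g, a, b)" by (cases x) auto
    obtain g' a' b' where ye: "y = (g', a', b')" by (cases y) auto
    have g: "g \<in> K" "a \<in> F3" "b \<in> F3" using x xe by auto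
    have g': "g' \<in> K" "a' \<in> F3" "b' \<in> F3" using y ye by auto
    have m1: "vadd k (P a b) g \<in> fib k u w a b" using dot_vadd_fib P g unfolding K_def by blast
    have m2: "vadd k (P a' b') g' \<in> fib k u w a' b'" using dot_vadd_fib P g' unfolding K_def by blast
    show "(\<Phi> x = \<Phi> y) = (x = y)"
    proof
      assume e: "\<Phi> x = \<Phi> y"
      then have e': "vadd k (P a b) g = vadd k (P a' b') g'" unfolding \<Phi>_def xe ye by simp
      then have "a = a'" "b = b'" using m1 m2 unfolding fib_def by auto
      then have "g = g'" using e' vadd_cancel g g' fib_sub unfolding K_def by blast
      then show "x = y" using xe ye \<open>a = a'\<close> \<open>b = b'\<close> by simp
    qed simp
  next
    fix x assume "x \<in> K \<times> (F3 \<times> F3)"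
    then show "\<Phi> x \<in> vecs k" unfolding \<Phi>_def by auto
  next
    fix y assume y: "y \<in> vecs k"
    define a where "a = dot k u y"
    define b where "b = dot k w y"
    have ab: "a \<in> F3" "b \<in> F3" unfolding a_def b_def by simp_all
    have yf: "y \<in> fib k u w a b" using y unfolding fib_def a_def b_def by simp
    have "y \<in> vadd k (P a b) ` K" using yf fib_translate[OF P[OF ab]] unfolding K_def by blast
    then obtain g where "g \<in> K" "y = vadd k (P a b) g" by blast
    then show "\<exists>x\<in>K \<times> (F3 \<times> F3). y = \<Phi> x" using ab unfolding \<Phi>_def by force
  qed
  then have "card (K \<times> (F3 \<times> F3)) = card (vecs k)" by (rule bij_betw_same_card)
  then show ?thesis unfolding K_def by (simp add: card_cartesian_product)
qed

lemma ker_card: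
  assumes ind: "indep2 k u w" and k: "2 \<le> k"
  shows "card (fib k u w 0 0) = 3 ^ (k - 2)"
proof -
  define m where "m = k - 2"
  have km: "k = m + 2" using k unfolding m_def by simp
  have "(3::nat) ^ k = 3 ^ m * 9" unfolding km by (simp add: power_add)
  then show ?thesis using ker_card9[OF ind] km by simp
qed


lemma ker_subspace: "lin_subspace k (fib k u w 0 0)"
  unfolding lin_subspace_def fib_def
  by (auto simp: dot_vadd2 dot_smul2 dot_comm[of k u "vzero k"] dot_comm[of k w "vzero k"])

lemma span_sub:
  assumes C: "lin_subspace n C" and v: "\<forall>j<m. v j \<in> C"
  shows "(\<lambda>c. lincomb n m c v) ` PiE {..<m} (\<lambda>_. F3) \<subseteq> C"
  using lincomb_closed[OF C v] by (auto simp: PiE_iff)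

lemma fib_affine:
  assumes ind: "indep2 k u w" and k: "2 \<le> k" and ab: "a \<in> F3" "b \<in> F3"
  shows "affine_sub k (k - 2) (fib k u w a b)"
proof -
  define K where "K = fib k u w 0 0"
  have Ksub: "lin_subspace k K" unfolding K_def by (rule ker_subspace)
  have cK: "card K = 3 ^ (k - 2)" unfolding K_def by (rule ker_card[OF ind k])
  obtain v where vK: "\<forall>j<k-2. v j \<in> K" and li: "lin_indep k (k-2) v"
    using greedy[OF Ksub, of "k-2"] cK by auto
  define Sp where "Sp = (\<lambda>c. lincomb k (k-2) c v) ` PiE {..<k-2} (\<lambda>_. F3)"
  have "Sp \<subseteq> K" unfolding Sp_def by (rule span_sub[OF Ksub vK])
  moreover have "card Sp = card K" unfolding Sp_def cK by (rule span_card[OF li])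
  ultimately have SpK: "Sp = K" using card_subset_eq lin_subspace_finite[OF Ksub] by blast
  obtain p where p: "p \<in> vecs k" "dot k u p = a mod 3" "dot k w p = b mod 3"
    using surj2[OF ind] by blast
  have pf: "p \<in> fib k u w a b" using p ab unfolding fib_def by simp
  have "fib k u w a b = vadd k p ` Sp" unfolding SpK K_def by (rule fib_translate[OF pf])
  also have "\<dots> = {vadd k p (lincomb k (k-2) c v) | c. c \<in> PiE {..<k-2} (\<lambda>_. F3)}"
    unfolding Sp_def by blast
  finally have eq: "fib k u w a b = {vadd k p (lincomb k (k-2) c v) | c. c \<in> PiE {..<k-2} (\<lambda>_. F3)}" .
  have "\<forall>j<k-2. v j \<in> vecs k" using vK Ksub unfolding lin_subspace_def by auto
  then show ?thesis unfolding affine_sub_def using p(1) li eq by blast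
qed

lemma vadd_comm: "vadd k x y = vadd k y x"
  unfolding vadd_def by (simp add: add.commute)

lemma annih_card:
  assumes v: "\<forall>j<m. v j \<in> vecs k" and km: "k = m + 2"
  shows "9 \<le> card {x \<in> vecs k. \<forall>j<m. dot k x (v j) = 0}"
proof -
  define W where "W = {x \<in> vecs k. \<forall>j<m. dot k x (v j) = 0}"
  define f where "f = (\<lambda>x. restrict (\<lambda>j. dot k x (v j)) {..<m})"
  define r where "r = (\<lambda>y. SOME x. x \<in> vecs k \<and> f x = y)"
  define h where "h = (\<lambda>x. (f x, vadd k x (smul k 2 (r (f x)))))"
  have r: "r (f x) \<in> vecs k \<and> f (r (f x)) = f x" if "x \<in> vecs k" for x
    unfolding r_def by (rule someI[where P="\<lambda>z. z \<in> vecs k \<and> f z = f x"]) (use that in blast)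
  have fv: "f x \<in> vecs m" for x unfolding f_def vecs_def by auto
  have hin: "h x \<in> vecs m \<times> W" if x: "x \<in> vecs k" for x
  proof -
    have "dot k (vadd k x (smul k 2 (r (f x)))) (v j) = 0" if j: "j < m" for j
    proof -
      have "dot k (r (f x)) (v j) = dot k x (v j)"
        using fun_cong[OF conjunct2[OF r[OF x]], of j] j unfolding f_def by simp
      then show ?thesis by (simp add: dot_vadd dot_smul mod_simps)
    qed
    then show ?thesis unfolding h_def W_def using fv by simp
  qed
  have "inj_on h (vecs k)"
  proof (rule inj_onI)
    fix x y assume x: "x \<in> vecs k" and y: "y \<in> vecs k" and e: "h x = h y"
    then have fe: "f x = f y" unfolding h_def by simp
    then have "vadd k (smul k 2 (r (f x))) x = vadd k (smul k 2 (r (f x))) y"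
      using e unfolding h_def by (simp add: vadd_comm)
    then show "x = y" using x y by (rule vadd_cancel[rotated 2])
  qed
  moreover have "h ` vecs k \<subseteq> vecs m \<times> W" using hin by blast
  moreover have "finite (vecs m \<times> W)" unfolding W_def by simp
  ultimately have "card (vecs k) \<le> card (vecs m \<times> W)" by (rule card_inj_on_le)
  then have "3 ^ m * 9 \<le> 3 ^ m * card W" unfolding km by (simp add: card_cartesian_product power_add)
  then show ?thesis unfolding W_def by simp
qed

lemma lin_indep2_indep2:
  assumes li: "lin_indep k 2 c"
  shows "indep2 k (c 0) (c 1)"
  unfolding indep2_def
proof (intro allI impI)
  fix l m :: int assume h: "\<forall>j<k. (l * c 0 j + m * c 1 j) mod 3 = 0"
  define L where "L = (\<lambda>j::nat. if j = 0 then l else m)"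
  have "\<forall>i<k. (\<Sum>j<2. L j * c j i) mod 3 = 0"
    using h unfolding L_def by (simp add: numeral_2_eq_2)
  then show "l mod 3 = 0 \<and> m mod 3 = 0"
    using lin_indep_int[OF li, of L 0] lin_indep_int[OF li, of L 1] unfolding L_def by simp
qed


lemma annih_subspace: "lin_subspace k {x \<in> vecs k. \<forall>j<m. dot k x (v j) = 0}"
  unfolding lin_subspace_def by (auto simp: dot_vadd dot_smul)

lemma affine_fib:
  assumes k: "2 \<le> k" and A: "affine_sub k (k - 2) A"
  shows "\<exists>u w a b. indep2 k u w \<and> a \<in> F3 \<and> b \<in> F3 \<and> A = fib k u w a b"
proof -
  define m where "m = k - 2"
  have km: "k = m + 2" using k unfolding m_def by simp
  obtain p v where p: "p \<in> vecs k" and v: "\<forall>j<m. v j \<in> vecs k" and li: "lin_indep k m v"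
    and Aeq: "A = {vadd k p (lincomb k m c v) | c. c \<in> PiE {..<m} (\<lambda>_. F3)}"
    using A unfolding affine_sub_def m_def by blast
  define W where "W = {x \<in> vecs k. \<forall>j<m. dot k x (v j) = 0}"
  have Wsub: "lin_subspace k W" unfolding W_def by (rule annih_subspace)
  have "3 ^ 2 \<le> card W" using annih_card[OF v km] unfolding W_def by simp
  then obtain c where cW: "\<forall>j<2. c j \<in> W" and lic: "lin_indep k 2 c"
    using greedy[OF Wsub] by blast
  define u where "u = c 0"
  define w where "w = c 1"
  have ind: "indep2 k u w" unfolding u_def w_def by (rule lin_indep2_indep2[OF lic])
  have uW: "u \<in> W" and wW: "w \<in> W" using cW unfolding u_def w_def by auto
  define a where "a = dot k u p"
  define b where "b = dot k w p"
  have pf: "p \<in> fib k u w a b" using p unfolding fib_def a_def b_def by simp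
  have zero: "dot k y (lincomb k m e v) = 0" if "y \<in> W" for y e
  proof -
    have "(\<Sum>j<m. e j * dot k y (v j)) = 0" using that unfolding W_def by simp
    then show ?thesis by (simp add: dot_lincomb)
  qed
  have AF: "A \<subseteq> fib k u w a b"
  proof
    fix x assume "x \<in> A"
    then obtain e where x: "x = vadd k p (lincomb k m e v)" using Aeq by blast
    have "a \<in> F3" "b \<in> F3" unfolding a_def b_def by simp_all
    then show "x \<in> fib k u w a b" unfolding x fib_def
      using zero[OF uW, of e] zero[OF wW, of e] by (simp add: dot_vadd2 a_def b_def)
  qed
  have "A = (\<lambda>e. vadd k p (lincomb k m e v)) ` PiE {..<m} (\<lambda>_. F3)" unfolding Aeq by blast
  moreover have "inj_on (\<lambda>e. vadd k p (lincomb k m e v)) (PiE {..<m} (\<lambda>_. F3))"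
    by (rule inj_onI) (metis lincomb_in vadd_cancel lincomb_inj[OF li])
  ultimately have cA: "card A = 3 ^ m" by (simp add: card_image)
  have "card (fib k u w a b) = 3 ^ m"
    using fib_card[OF pf] ker_card[OF ind k] unfolding m_def by simp
  then have "A = fib k u w a b" using card_subset_eq[OF finite_fib AF] cA by simp
  moreover have "a \<in> F3" "b \<in> F3" unfolding a_def b_def by simp_all
  ultimately show ?thesis using ind by blast
qed


lemma F3_cases: "x \<in> F3 \<Longrightarrow> x = 0 \<or> x = 1 \<or> x = 2"
  unfolding F3_def by auto

lemma brute_coeffs:
  assumes "a \<in> F3" "b \<in> F3" "\<not> (a = 0 \<and> b = 0)"
  shows "\<not> (((a*a+b*b)*a) mod 3 = 0 \<and> ((a*a+b*b)*b) mod 3 = 0)"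
    "\<not> ((2*(a*a+b*b)*a+b) mod 3 = 0 \<and> (2*(a*a+b*b)*b-a) mod 3 = 0)"
    "\<not> (((a*a+b*b)*a - (2*(a*a+b*b)*a+b)) mod 3 = 0 \<and> ((a*a+b*b)*b - (2*(a*a+b*b)*b-a)) mod 3 = 0)"
  using F3_cases[OF assms(1)] F3_cases[OF assms(2)] assms(3) by auto

lemma brute_recover:
  assumes "a \<in> F3" "b \<in> F3" "\<not> (a = 0 \<and> b = 0)" "X \<in> F3" "Y \<in> F3"
    and "(((a*a+b*b)*a) * X + ((a*a+b*b)*b) * Y) mod 3 \<noteq> 0"
    and "((2*(a*a+b*b)*a+b) * X + (2*(a*a+b*b)*b-a) * Y) mod 3 \<noteq> 0"
    and "(((a*a+b*b)*a) * X + ((a*a+b*b)*b) * Y) mod 3 \<noteq> ((2*(a*a+b*b)*a+b) * X + (2*(a*a+b*b)*b-a) * Y) mod 3"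
  shows "((((a*a+b*b)*a) * X + ((a*a+b*b)*b) * Y) mod 3 = 1 \<longrightarrow> X = a \<and> Y = b) \<and>
         ((((a*a+b*b)*a) * X + ((a*a+b*b)*b) * Y) mod 3 \<noteq> 1 \<longrightarrow> (2*X) mod 3 = a \<and> (2*Y) mod 3 = b)"
  using F3_cases[OF assms(1)] F3_cases[OF assms(2)] F3_cases[OF assms(4)] F3_cases[OF assms(5)] assms(3,6-8)
  by auto

lemma brute1: "z \<in> F3 \<Longrightarrow> X \<in> F3 \<Longrightarrow> Y \<in> F3 \<Longrightarrow> (z*X) mod 3 = 1 \<Longrightarrow> (z*Y) mod 3 = 2 \<Longrightarrow>
   (X = 1 \<and> Y = 2) \<or> (X = 2 \<and> Y = 1)"
  using F3_cases[of z] F3_cases[of X] F3_cases[of Y] by auto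

lemma three_F3: "a \<in> F3 \<Longrightarrow> b \<in> F3 \<Longrightarrow> c \<in> F3 \<Longrightarrow> a \<noteq> b \<Longrightarrow> b \<noteq> c \<Longrightarrow> a \<noteq> c \<Longrightarrow> {a, b, c} = F3"
  using F3_cases[of a] F3_cases[of b] F3_cases[of c] unfolding F3_def by auto

lemma brute2: "X \<in> F3 \<Longrightarrow> Y \<in> F3 \<Longrightarrow> Z \<in> F3 \<Longrightarrow>
   ((Y + 2*X) mod 3 = 1 \<and> (Z + 2*X) mod 3 = 2) \<or> ((Y + 2*X) mod 3 = 2 \<and> (Z + 2*X) mod 3 = 1) \<Longrightarrow>
   {X, Y, Z} = F3"
  using F3_cases[of X] F3_cases[of Y] F3_cases[of Z] unfolding F3_def by auto

lemma brute3: "X \<in> F3 \<Longrightarrow> Y \<in> F3 \<Longrightarrow> Z \<in> F3 \<Longrightarrow> (Y + 2*X) mod 3 \<noteq> 0 \<Longrightarrow>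
   (Z + 2*X) mod 3 = (2 * ((Y + 2*X) mod 3)) mod 3 \<Longrightarrow> {X, Y, Z} = F3"
  using F3_cases[of X] F3_cases[of Y] F3_cases[of Z] unfolding F3_def by auto

lemma F3_three_distinct:
  assumes "{a, b, c} = F3" shows "a \<noteq> b" "b \<noteq> c" "a \<noteq> c"
proof -
  have "card {a, b, c} = 3" using assms by simp
  then show "a \<noteq> b" "b \<noteq> c" "a \<noteq> c" by (auto simp: card_insert_if split: if_splits)
qed


lemma lin_mod2: "((l mod 3) * A + (m mod 3) * B) mod 3 = (l*A + m*B) mod (3::int)"
proof -
  have "((l mod 3) * A + (m mod 3) * B) mod 3 = (((l mod 3) * A) mod 3 + ((m mod 3) * B) mod 3) mod 3"
    by (rule mod_add_eq[symmetric])
  also have "\<dots> = ((l * A) mod 3 + (m * B) mod 3) mod 3"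
    by (simp only: mod_mult_left_eq)
  also have "\<dots> = (l*A + m*B) mod 3" by (rule mod_add_eq)
  finally show ?thesis .
qed

lemma brute_dep: "l \<in> F3 \<Longrightarrow> m \<in> F3 \<Longrightarrow> U \<in> F3 \<Longrightarrow> W \<in> F3 \<Longrightarrow> \<not> (l = 0 \<and> m = 0) \<Longrightarrow>
  (l*U + m*W) mod 3 = 0 \<Longrightarrow> (m = 0 \<longrightarrow> U = 0) \<and> (m \<noteq> 0 \<longrightarrow> W = (((2*l*m) mod 3) * U) mod 3)"
  using F3_cases[of l] F3_cases[of m] F3_cases[of U] F3_cases[of W] by auto

lemma smul0: "smul k 0 x = vzero k"
  unfolding smul_def vzero_def by simp

lemma smul1: "x \<in> vecs k \<Longrightarrow> smul k 1 x = x"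
  by (rule vec_eqI[OF smul_in]) (simp_all add: vecs_modeq)

lemma dep_smul2:
  assumes u: "u \<in> vecs k" and w: "w \<in> vecs k" and nd: "\<not> indep2 k u w"
    and u0: "u \<noteq> vzero k" and w0: "w \<noteq> vzero k" and wu: "w \<noteq> u"
  shows "w = smul k 2 u"
proof -
  obtain l m where h: "\<forall>j<k. (l * u j + m * w j) mod 3 = 0" and nz: "\<not> (l mod 3 = 0 \<and> m mod 3 = 0)"
    using nd unfolding indep2_def by blast
  define l' where "l' = l mod 3"
  define m' where "m' = m mod 3"
  have lm: "l' \<in> F3" "m' \<in> F3" "\<not> (l' = 0 \<and> m' = 0)" using nz unfolding l'_def m'_def by auto
  have h': "(l' * u j + m' * w j) mod 3 = 0" if "j < k" for j
    using h that lin_mod2 unfolding l'_def m'_def by metis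
  have b: "(m' = 0 \<longrightarrow> u j = 0) \<and> (m' \<noteq> 0 \<longrightarrow> w j = (((2*l'*m') mod 3) * u j) mod 3)" if "j < k" for j
    using brute_dep[OF lm(1,2) vecs_in[OF u that] vecs_in[OF w that] lm(3) h'[OF that]] .
  show ?thesis
  proof (cases "m' = 0")
    case True
    then have "u = vzero k" using b by (intro vec_eqI[OF u vzero_in]) simp
    then show ?thesis using u0 by simp
  next
    case False
    define t where "t = (2*l'*m') mod 3"
    have wt: "w = smul k t u" using b False unfolding t_def by (intro vec_eqI[OF w smul_in]) simp
    have "t = 0 \<or> t = 1 \<or> t = 2" unfolding t_def by (rule F3_cases) simp
    then show ?thesis
    proof (elim disjE)
      assume "t = 0" then show ?thesis using wt w0 smul0 by simp
    next
      assume "t = 1" then show ?thesis using wt wu smul1[OF u] by simp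
    next
      assume "t = 2" then show ?thesis using wt by simp
    qed
  qed
qed

lemma exists_indep:
  assumes k: "2 \<le> k" and u: "u \<in> vecs k" and u0: "u \<noteq> vzero k"
  shows "\<exists>e\<in>vecs k. indep2 k u e"
proof -
  obtain j where j: "j < k" "u j \<noteq> 0"
    using u0 vec_eqI[OF u vzero_in] by fastforce
  have uj: "u j = 1 \<or> u j = 2" using F3_cases[OF vecs_in[OF u j(1)]] j(2) by auto
  define j' where "j' = (if j = 0 then 1 else 0::nat)"
  have j': "j' < k" "j' \<noteq> j" unfolding j'_def using k by auto
  define e where "e = restrict (\<lambda>i. if i = j' then 1 else 0::int) {..<k}"
  have ein: "e \<in> vecs k" unfolding e_def vecs_def F3_def by auto
  have "indep2 k u e" unfolding indep2_def
  proof (intro allI impI)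
    fix l m :: int assume h: "\<forall>i<k. (l * u i + m * e i) mod 3 = 0"
    have "(l * u j) mod 3 = 0" using h j(1) j' unfolding e_def by auto
    then have l0: "l mod 3 = 0" using uj by (elim disjE) (simp_all, presburger)
    have "(l * u j' + m) mod 3 = 0" using h j' unfolding e_def by auto
    moreover have "(l * u j') mod 3 = 0" using l0 by (metis mod_mult_left_eq mult_zero_left mod_0)
    ultimately have "m mod 3 = 0" by (metis add.commute mod_add_right_eq add.right_neutral mod_add_left_eq mod_mod_trivial)
    then show "l mod 3 = 0 \<and> m mod 3 = 0" using l0 by simp
  qed
  then show ?thesis using ein by blast
qed


lemma TL_finite: "finite {card C | C. lin_subspace n C \<and> trifferent n C}"
proof (rule finite_subset[of _ "{..card (vecs n)}"])
  show "{card C | C. lin_subspace n C \<and> trifferent n C} \<subseteq> {..card (vecs n)}"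
  proof
    fix x assume "x \<in> {card C | C. lin_subspace n C \<and> trifferent n C}"
    then obtain C where "x = card C" "C \<subseteq> vecs n" unfolding lin_subspace_def by blast
    moreover have "card C \<le> card (vecs n)" by (rule card_mono[OF finite_vecs \<open>C \<subseteq> vecs n\<close>])
    ultimately show "x \<in> {..card (vecs n)}" by simp
  qed
qed simp

lemma vzero_sub: "lin_subspace n {vzero n}"
proof -
  have "vadd n (vzero n) (vzero n) = vzero n" by (rule vec_eqI[OF vadd_in vzero_in]) simp
  moreover have "smul n c (vzero n) = vzero n" for c by (rule vec_eqI[OF smul_in vzero_in]) simp
  ultimately show ?thesis unfolding lin_subspace_def by simp
qed

lemma TL_attained: "\<exists>C. lin_subspace n C \<and> trifferent n C \<and> card C = T_L n"
proof -
  have "trifferent n {vzero n}" unfolding trifferent_def by simp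
  then have ne: "{card C | C. lin_subspace n C \<and> trifferent n C} \<noteq> {}" using vzero_sub by blast
  show ?thesis using Max_in[OF TL_finite ne] unfolding T_L_def by auto
qed

lemma TL_ge: "lin_subspace n C \<Longrightarrow> trifferent n C \<Longrightarrow> card C \<le> T_L n"
  unfolding T_L_def by (rule Max_ge[OF TL_finite]) blast

lemma code_from_cols:
  assumes k: "1 \<le> k" and g: "\<forall>i<n. g i \<in> vecs k"
    and P: "\<And>x y z. x \<in> vecs k \<Longrightarrow> y \<in> vecs k \<Longrightarrow> z \<in> vecs k \<Longrightarrow> x \<noteq> y \<Longrightarrow> y \<noteq> z \<Longrightarrow> x \<noteq> z \<Longrightarrow>
        \<exists>i<n. {dot k x (g i), dot k y (g i), dot k z (g i)} = F3"
  shows "3 ^ k \<le> T_L n"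
proof -
  define enc where "enc = (\<lambda>x. restrict (\<lambda>i. dot k x (g i)) {..<n})"
  define C where "C = enc ` vecs k"
  have enc_in: "enc x \<in> vecs n" for x unfolding enc_def dot_def by simp
  have enc_vadd: "enc (vadd k x y) = vadd n (enc x) (enc y)" for x y
    by (rule vec_eqI[OF enc_in vadd_in]) (simp add: enc_def dot_vadd)
  have enc_smul: "enc (smul k c x) = smul n c (enc x)" for c x
    by (rule vec_eqI[OF enc_in smul_in]) (simp add: enc_def dot_smul)
  have enc_zero: "enc (vzero k) = vzero n"
    by (rule vec_eqI[OF enc_in vzero_in]) (simp add: enc_def)
  have sub: "lin_subspace n C"
    unfolding lin_subspace_def C_def
    using enc_in enc_zero[symmetric] enc_vadd[symmetric] enc_smul[symmetric] by auto
  have trif: "trifferent n C"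
    unfolding trifferent_def C_def
  proof (intro ballI impI)
    fix x' y' z' assume x': "x' \<in> enc ` vecs k" and y': "y' \<in> enc ` vecs k" and z': "z' \<in> enc ` vecs k"
      and d: "x' \<noteq> y' \<and> y' \<noteq> z' \<and> x' \<noteq> z'"
    obtain x y z where xyz: "x \<in> vecs k" "y \<in> vecs k" "z \<in> vecs k" "x' = enc x" "y' = enc y" "z' = enc z"
      using x' y' z' by blast
    then obtain i where i: "i < n" "{dot k x (g i), dot k y (g i), dot k z (g i)} = F3"
      using P[of x y z] d by blast
    then show "\<exists>i<n. {x' i, y' i, z' i} = F3" using xyz unfolding enc_def by auto
  qed
  have "inj_on enc (vecs k)"
  proof (rule inj_onI, rule ccontr)
    fix x y assume x: "x \<in> vecs k" and y: "y \<in> vecs k" and e: "enc x = enc y" and ne: "x \<noteq> y"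
    have "card {x, y} < card (vecs k)"
    proof -
      have "card {x, y} \<le> 2" by (simp add: card_insert_if)
      moreover have "(3::nat) \<le> 3 ^ k" using k by (metis power_one_right power_increasing zero_less_numeral one_le_numeral)
      ultimately show ?thesis by simp
    qed
    have "\<not> vecs k \<subseteq> {x, y}"
    proof
      assume "vecs k \<subseteq> {x, y}"
      then have "card (vecs k) \<le> card {x, y}" by (rule card_mono[rotated]) simp
      then show False using \<open>card {x, y} < card (vecs k)\<close> by simp
    qed
    then obtain z where z: "z \<in> vecs k" "z \<notin> {x, y}" by blast
    obtain i where i: "i < n" "{dot k x (g i), dot k y (g i), dot k z (g i)} = F3"
      using P[of x y z] x y z ne by auto
    have "dot k x (g i) = dot k y (g i)" using fun_cong[OF e, of i] i(1) unfolding enc_def by simp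
    then show False using F3_three_distinct(1)[OF i(2)] by simp
  qed
  then have "card C = 3 ^ k" unfolding C_def by (simp add: card_image)
  then show ?thesis using TL_ge[OF sub trif] by simp
qed


lemma b3_finite: "finite {card B | B. B \<subseteq> vecs k \<and> blocking2 k (\<Union>\<zeta>\<in>F3. smul k \<zeta> ` B)}"
proof (rule finite_subset[of _ "{..card (vecs k)}"])
  show "{card B | B. B \<subseteq> vecs k \<and> blocking2 k (\<Union>\<zeta>\<in>F3. smul k \<zeta> ` B)} \<subseteq> {..card (vecs k)}"
  proof
    fix x assume "x \<in> {card B | B. B \<subseteq> vecs k \<and> blocking2 k (\<Union>\<zeta>\<in>F3. smul k \<zeta> ` B)}"
    then obtain B where "x = card B" "B \<subseteq> vecs k" by blast
    moreover have "card B \<le> card (vecs k)" by (rule card_mono[OF finite_vecs \<open>B \<subseteq> vecs k\<close>])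
    ultimately show "x \<in> {..card (vecs k)}" by simp
  qed
qed simp

lemma b3_le: "B \<subseteq> vecs k \<Longrightarrow> blocking2 k (\<Union>\<zeta>\<in>F3. smul k \<zeta> ` B) \<Longrightarrow> b3' k \<le> card B"
  unfolding b3'_def by (rule Min_le[OF b3_finite]) blast

lemma affine_nonempty: "affine_sub k d A \<Longrightarrow> A \<noteq> {} \<and> A \<subseteq> vecs k"
proof -
  assume "affine_sub k d A"
  then obtain p v where A: "A = {vadd k p (lincomb k d c v) | c. c \<in> PiE {..<d} (\<lambda>_. F3)}"
    unfolding affine_sub_def by blast
  have "restrict (\<lambda>_. 0) {..<d} \<in> PiE {..<d} (\<lambda>_. F3)" unfolding F3_def by auto
  then have "vadd k p (lincomb k d (restrict (\<lambda>_. 0) {..<d}) v) \<in> A" unfolding A by blast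
  moreover have "A \<subseteq> vecs k"
  proof
    fix x assume "x \<in> A"
    then obtain c where "x = vadd k p (lincomb k d c v)" unfolding A by blast
    then show "x \<in> vecs k" by simp
  qed
  ultimately show ?thesis by blast
qed

lemma b3_attained: "\<exists>B. B \<subseteq> vecs k \<and> blocking2 k (\<Union>\<zeta>\<in>F3. smul k \<zeta> ` B) \<and> card B = b3' k"
proof -
  have "vecs k \<subseteq> (\<Union>\<zeta>\<in>F3. smul k \<zeta> ` vecs k)"
  proof
    fix x assume "x \<in> vecs k"
    then have "x = smul k 1 x" by (simp add: smul1)
    moreover have "(1::int) \<in> F3" unfolding F3_def by simp
    ultimately show "x \<in> (\<Union>\<zeta>\<in>F3. smul k \<zeta> ` vecs k)" using \<open>x \<in> vecs k\<close> by blast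
  qed
  then have "blocking2 k (\<Union>\<zeta>\<in>F3. smul k \<zeta> ` vecs k)"
    unfolding blocking2_def using affine_nonempty by fastforce
  then have ne: "{card B | B. B \<subseteq> vecs k \<and> blocking2 k (\<Union>\<zeta>\<in>F3. smul k \<zeta> ` B)} \<noteq> {}" by blast
  show ?thesis using Min_in[OF b3_finite ne] unfolding b3'_def by auto
qed

lemma diff_zero_eq: "x \<in> vecs k \<Longrightarrow> y \<in> vecs k \<Longrightarrow> vadd k y (smul k 2 x) = vzero k \<Longrightarrow> y = x"
proof (rule vec_eqI)
  fix j assume x: "x \<in> vecs k" and y: "y \<in> vecs k" and e: "vadd k y (smul k 2 x) = vzero k" and j: "j < k"
  have "vadd k y (smul k 2 x) j = vzero k j" using e by simp
  then have "(y j + (2 * x j) mod 3) mod 3 = 0" using j by simp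
  then show "y j = x j" using F3_cases[OF vecs_in[OF x j]] F3_cases[OF vecs_in[OF y j]] by auto
qed

lemma dot_diff: "dot k (vadd k y (smul k 2 x)) G = (dot k y G + 2 * dot k x G) mod 3"
  by (simp add: dot_vadd dot_smul mod_add_right_eq)

lemma dir_back:
  assumes k: "0 < k" and n: "0 < n" and b: "b3' k \<le> n"
  shows "3 ^ k \<le> T_L n"
proof (cases "k = 1")
  case True
  define g where "g = (\<lambda>i::nat. restrict (\<lambda>_::nat. 1::int) {..<1})"
  have gv: "\<forall>i<n. g i \<in> vecs k" unfolding g_def vecs_def F3_def True by auto
  have dg: "dot k x (g i) = x 0" if "x \<in> vecs k" for x i
    using that vecs_in[OF that, of 0] unfolding dot_def g_def True by simp
  show ?thesis
  proof (rule code_from_cols[OF _ gv])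
    fix x y z assume xyz: "x \<in> vecs k" "y \<in> vecs k" "z \<in> vecs k" and d: "x \<noteq> y" "y \<noteq> z" "x \<noteq> z"
    have neq: "a 0 \<noteq> b 0" if "a \<in> vecs k" "b \<in> vecs k" "a \<noteq> b" for a b
      using vec_eqI[OF that(1,2)] that(3) True by auto
    have "{x 0, y 0, z 0} = F3"
      using three_F3[OF vecs_in[OF xyz(1)] vecs_in[OF xyz(2)] vecs_in[OF xyz(3)]] neq d xyz True by auto
    then show "\<exists>i<n. {dot k x (g i), dot k y (g i), dot k z (g i)} = F3"
      using n dg xyz by auto
  qed (use k in simp)
next
  case False
  then have k2: "2 \<le> k" using k by simp
  obtain B where Bv: "B \<subseteq> vecs k" and bl: "blocking2 k (\<Union>\<zeta>\<in>F3. smul k \<zeta> ` B)" and cB: "card B = b3' k"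
    using b3_attained by blast
  have fB: "finite B" using finite_subset[OF Bv finite_vecs] .
  obtain f where f: "bij_betw f {0..<card B} B" using ex_bij_betw_nat_finite[OF fB] by blast
  define g where "g = (\<lambda>i. if i < card B then f i else vzero k)"
  have gv: "\<forall>i<n. g i \<in> vecs k" unfolding g_def using f Bv bij_betwE by fastforce
  have gB: "\<exists>i<n. g i = b" if bB: "b \<in> B" for b
  proof -
    have "b \<in> f ` {0..<card B}" using f bB unfolding bij_betw_def by simp
    then obtain i where "i < card B" "f i = b" by auto
    then show ?thesis using b cB unfolding g_def by (intro exI[of _ i]) simp
  qed
  have H: "\<exists>b\<in>B. (dot k u b = 1 \<and> dot k w b = 2) \<or> (dot k u b = 2 \<and> dot k w b = 1)" if ind: "indep2 k u w" for u w
  proof -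
    have "affine_sub k (k - 2) (fib k u w 1 2)" using fib_affine[OF ind k2] unfolding F3_def by simp
    then have "(\<Union>\<zeta>\<in>F3. smul k \<zeta> ` B) \<inter> fib k u w 1 2 \<noteq> {}" using bl k2 unfolding blocking2_def by blast
    then obtain \<zeta> b where zb: "\<zeta> \<in> F3" "b \<in> B" "smul k \<zeta> b \<in> fib k u w 1 2" by blast
    then have "(\<zeta> * dot k u b) mod 3 = 1" "(\<zeta> * dot k w b) mod 3 = 2"
      unfolding fib_def by (simp_all add: dot_smul2)
    then show ?thesis using brute1[OF zb(1) dot_in dot_in] zb(2) by blast
  qed
  show ?thesis
  proof (rule code_from_cols[OF _ gv])
    fix x y z assume xyz: "x \<in> vecs k" "y \<in> vecs k" "z \<in> vecs k" and d: "x \<noteq> y" "y \<noteq> z" "x \<noteq> z"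
    define u where "u = vadd k y (smul k 2 x)"
    define w where "w = vadd k z (smul k 2 x)"
    have uv: "u \<in> vecs k" and wv: "w \<in> vecs k" unfolding u_def w_def by simp_all
    have u0: "u \<noteq> vzero k" using diff_zero_eq[OF xyz(1,2)] d unfolding u_def by blast
    have w0: "w \<noteq> vzero k" using diff_zero_eq[OF xyz(1,3)] d unfolding w_def by blast
    have uw: "w \<noteq> u"
    proof
      assume "w = u"
      then have "vadd k (smul k 2 x) z = vadd k (smul k 2 x) y" unfolding u_def w_def by (simp add: vadd_comm)
      then have "z = y" using vadd_cancel xyz by blast
      then show False using d by simp
    qed
    show "\<exists>i<n. {dot k x (g i), dot k y (g i), dot k z (g i)} = F3"
    proof (cases "indep2 k u w")
      case True
      then obtain b where b: "b \<in> B" "(dot k u b = 1 \<and> dot k w b = 2) \<or> (dot k u b = 2 \<and> dot k w b = 1)"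
        using H by blast
      obtain i where i: "i < n" "g i = b" using gB[OF b(1)] by blast
      have "{dot k x b, dot k y b, dot k z b} = F3"
        using b(2) unfolding u_def w_def dot_diff by (intro brute2) simp_all
      then show ?thesis using i by blast
    next
      case False
      then have wu2: "w = smul k 2 u" using dep_smul2[OF uv wv _ u0 w0 uw] by blast
      obtain e where "e \<in> vecs k" "indep2 k u e" using exists_indep[OF k2 uv u0] by blast
      then obtain b where b: "b \<in> B" "dot k u b \<noteq> 0" using H by fastforce
      obtain i where i: "i < n" "g i = b" using gB[OF b(1)] by blast
      have "dot k w b = (2 * dot k u b) mod 3" unfolding wu2 by (simp add: dot_smul)
      then have "{dot k x b, dot k y b, dot k z b} = F3"
        using b(2) unfolding u_def w_def dot_diff by (intro brute3) simp_all
      then show ?thesis using i by blast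
    qed
  qed (use k in simp)
qed


lemma diff_mod0: "(A::int) mod 3 = B mod 3 \<Longrightarrow> (A - B) mod 3 = 0"
  by (simp add: mod_eq_dvd_iff)

lemma dir_fwd:
  assumes k: "0 < k" and n: "0 < n" and T: "3 ^ k \<le> T_L n"
  shows "b3' k \<le> n"
proof -
  obtain C where sub: "lin_subspace n C" and trif: "trifferent n C" and cC: "card C = T_L n"
    using TL_attained by blast
  obtain c where cC': "\<forall>j<k. c j \<in> C" and li: "lin_indep n k c"
    using greedy[OF sub, of k] T cC by auto
  have cv: "c j \<in> vecs n" if "j < k" for j using cC' sub that unfolding lin_subspace_def by auto
  define g where "g = (\<lambda>i. restrict (\<lambda>j. c j i) {..<k})"
  have gv: "g i \<in> vecs k" if "i < n" for i
    unfolding g_def vecs_def using vecs_in[OF cv that] by auto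
  define B where "B = g ` {..<n}"
  have Bv: "B \<subseteq> vecs k" unfolding B_def using gv by auto
  have enc_dot: "lincomb n k x c i = dot k x (g i)" if "i < n" for x i
  proof -
    have "(\<Sum>j<k. x j * c j i) = (\<Sum>j<k. x j * g i j)" unfolding g_def by (rule sum.cong) auto
    then show ?thesis using that unfolding lincomb_eq dot_def by simp
  qed
  have enc_C: "lincomb n k x c \<in> C" if "x \<in> vecs k" for x
    using lincomb_closed[OF sub cC'] vecs_in[OF that] by blast
  have P: "\<exists>i<n. dot k x (g i) \<noteq> dot k y (g i) \<and> dot k y (g i) \<noteq> dot k z (g i) \<and> dot k x (g i) \<noteq> dot k z (g i)"
    if xyz: "x \<in> vecs k" "y \<in> vecs k" "z \<in> vecs k" and d: "x \<noteq> y" "y \<noteq> z" "x \<noteq> z" for x y z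
  proof -
    have inj: "lincomb n k a c \<noteq> lincomb n k b c" if "a \<in> vecs k" "b \<in> vecs k" "a \<noteq> b" for a b
      using lincomb_inj[OF li] that unfolding vecs_def by blast
    obtain i where i: "i < n" "{lincomb n k x c i, lincomb n k y c i, lincomb n k z c i} = F3"
      using trif enc_C[OF xyz(1)] enc_C[OF xyz(2)] enc_C[OF xyz(3)] inj[OF xyz(1,2) d(1)]
        inj[OF xyz(2,3) d(2)] inj[OF xyz(1,3) d(3)] unfolding trifferent_def by blast
    then show ?thesis using F3_three_distinct[OF i(2)] enc_dot by auto
  qed
  have g0B: "g 0 \<in> B" unfolding B_def using n by simp
  define S where "S = (\<Union>\<zeta>\<in>F3. smul k \<zeta> ` B)"
  have inS: "smul k \<zeta> b \<in> S" if "\<zeta> \<in> F3" "b \<in> B" for \<zeta> b using that unfolding S_def by blast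
  have "blocking2 k S"
    unfolding blocking2_def
  proof (intro conjI impI allI)
    show "S \<subseteq> vecs k" unfolding S_def by auto
  next
    fix A assume k2: "2 \<le> k" and A: "affine_sub k (k - 2) A"
    obtain u w a b where ind: "indep2 k u w" and ab: "a \<in> F3" "b \<in> F3" and Aeq: "A = fib k u w a b"
      using affine_fib[OF k2 A] by blast
    show "S \<inter> A \<noteq> {}"
    proof (cases "a = 0 \<and> b = 0")
      case True
      have "vzero k \<in> A" unfolding Aeq fib_def using True
        by (simp add: dot_comm[of k u] dot_comm[of k w])
      moreover have "vzero k \<in> S" using inS[OF _ g0B, of 0] smul0 unfolding F3_def by simp
      ultimately show ?thesis by blast
    next
      case False
      define \<sigma> where "\<sigma> = a*a+b*b"
      define l where "l = \<sigma>*a"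
      define m where "m = \<sigma>*b"
      define l' where "l' = 2*\<sigma>*a+b"
      define m' where "m' = 2*\<sigma>*b-a"
      have bc: "\<not> (l mod 3 = 0 \<and> m mod 3 = 0)" "\<not> (l' mod 3 = 0 \<and> m' mod 3 = 0)"
        "\<not> ((l - l') mod 3 = 0 \<and> (m - m') mod 3 = 0)"
        using brute_coeffs[OF ab False] unfolding l_def m_def l'_def m'_def \<sigma>_def by simp_all
      define y where "y = restrict (\<lambda>j. (l * u j + m * w j) mod 3) {..<k}"
      define z where "z = restrict (\<lambda>j. (l' * u j + m' * w j) mod 3) {..<k}"
      have yv: "y \<in> vecs k" and zv: "z \<in> vecs k" unfolding y_def z_def by simp_all
      have y0: "vzero k \<noteq> y"
      proof
        assume e: "vzero k = y"
        have "\<forall>j<k. (l * u j + m * w j) mod 3 = 0"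
        proof (intro allI impI)
          fix j assume j: "j < k"
          have "vzero k j = y j" using e by simp
          then show "(l * u j + m * w j) mod 3 = 0" using j unfolding y_def by simp
        qed
        then show False using ind bc(1) unfolding indep2_def by blast
      qed
      have z0: "vzero k \<noteq> z"
      proof
        assume e: "vzero k = z"
        have "\<forall>j<k. (l' * u j + m' * w j) mod 3 = 0"
        proof (intro allI impI)
          fix j assume j: "j < k"
          have "vzero k j = z j" using e by simp
          then show "(l' * u j + m' * w j) mod 3 = 0" using j unfolding z_def by simp
        qed
        then show False using ind bc(2) unfolding indep2_def by blast
      qed
      have yz: "y \<noteq> z"
      proof
        assume e: "y = z"
        have "((l - l') * u j + (m - m') * w j) mod 3 = 0" if j: "j < k" for j
        proof -
          have "(l * u j + m * w j) mod 3 = (l' * u j + m' * w j) mod 3"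
            using fun_cong[OF e, of j] j unfolding y_def z_def by simp
          then have "((l * u j + m * w j) - (l' * u j + m' * w j)) mod 3 = 0" by (rule diff_mod0)
          moreover have "(l * u j + m * w j) - (l' * u j + m' * w j) = (l - l') * u j + (m - m') * w j"
            by (simp add: algebra_simps)
          ultimately show ?thesis by simp
        qed
        then show False using ind bc(3) unfolding indep2_def by blast
      qed
      obtain i where i: "i < n" "dot k (vzero k) (g i) \<noteq> dot k y (g i)" "dot k y (g i) \<noteq> dot k z (g i)"
        "dot k (vzero k) (g i) \<noteq> dot k z (g i)"
        using P[OF vzero_in yv zv y0 yz z0] by blast
      define G where "G = g i"
      define X where "X = dot k u G"
      define Y where "Y = dot k w G"
      have dy: "dot k y G = (l * X + m * Y) mod 3" unfolding y_def X_def Y_def by (rule dot_lin)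
      have dz: "dot k z G = (l' * X + m' * Y) mod 3" unfolding z_def X_def Y_def by (rule dot_lin)
      have rec: "((l * X + m * Y) mod 3 = 1 \<longrightarrow> X = a \<and> Y = b) \<and>
         ((l * X + m * Y) mod 3 \<noteq> 1 \<longrightarrow> (2*X) mod 3 = a \<and> (2*Y) mod 3 = b)"
        unfolding l_def m_def \<sigma>_def
        apply (rule brute_recover[OF ab False])
        using i dy dz unfolding G_def X_def Y_def l_def m_def l'_def m'_def \<sigma>_def by simp_all
      have Gv: "G \<in> vecs k" unfolding G_def using gv[OF i(1)] .
      have GB: "G \<in> B" unfolding G_def B_def using i(1) by simp
      show ?thesis
      proof (cases "(l * X + m * Y) mod 3 = 1")
        case True
        then have "G \<in> A" using rec Gv unfolding Aeq fib_def X_def Y_def by simp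
        moreover have "G \<in> S" using inS[OF _ GB, of 1] smul1[OF Gv] unfolding F3_def by simp
        ultimately show ?thesis by blast
      next
        case False
        then have "smul k 2 G \<in> A" using rec Gv unfolding Aeq fib_def X_def Y_def by (simp add: dot_smul2)
        moreover have "smul k 2 G \<in> S" using inS[OF _ GB, of 2] unfolding F3_def by simp
        ultimately show ?thesis by blast
      qed
    qed
  qed
  then have "b3' k \<le> card B" using b3_le[OF Bv] unfolding S_def by blast
  also have "card B \<le> n" unfolding B_def using card_image_le[of "{..<n}" g] by simp
  finally show ?thesis .
qed

theorem corollary6p3:
  fixes k n :: nat
  assumes "0 < k" and "0 < n"
  shows "3 ^ k \<le> T_L n \<longleftrightarrow> b3' k \<le> n"
  using dir_fwd[OF assms] dir_back[OF assms] by blast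

end
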